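(* There exist constants $c>0$ and $K>0$ such that for every positive integer $n$ there exists a divisor $m$ of $n$ with $m\ge n^{c/\log\log\log n}$ and $\sigma(m)\le K m$.
   Context: $\sigma(m)$ is the sum of the positive divisors of $m$. Convention: $\log x$ denotes $\max(\ln x,1)$. *)

theory Defs
  imports Complex_Main
begin

text \<open>Paper convention: log x denotes max(ln x, 1).\<close>
definition Log :: "real \<Rightarrow> real" where
  "Log x = max (ln x) 1"

definition sigma :: "nat \<Rightarrow> nat" where
  "sigma m = (\<Sum>d\<in>{d. d dvd m}. d)"

end

theory Submission
  imports Defs "HOL-Computational_Algebra.Primes"
begin


lemma sigma_submult:
  assumes "x > 0" "y > 0"
  shows "sigma (x*y) \<le> sigma x * sigma y"
proof -
  let ?D = "\<lambda>z::nat. {d. d dvd z}"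
  have fin: "finite (?D x \<times> ?D y)" using assms by simp
  have sub: "?D (x*y) \<subseteq> (\<lambda>(a,b). a*b) ` (?D x \<times> ?D y)"
  proof
    fix d assume "d \<in> ?D (x*y)"
    then obtain a b where "d = a*b" "a dvd x" "b dvd y" using division_decomp by blast
    then show "d \<in> (\<lambda>(a,b). a*b) ` (?D x \<times> ?D y)" by auto
  qed
  have "sigma (x*y) = sum id (?D (x*y))" unfolding sigma_def by simp
  also have "\<dots> \<le> sum id ((\<lambda>(a,b). a*b) ` (?D x \<times> ?D y))"
    by (rule sum_mono2) (use fin sub in auto)
  also have "\<dots> \<le> sum (id \<circ> (\<lambda>(a,b). a*b)) (?D x \<times> ?D y)"
    by (rule sum_image_le) (use fin in auto)
  also have "\<dots> = (\<Sum>(a,b)\<in>?D x \<times> ?D y. a*b)"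
    by (simp add: case_prod_beta comp_def)
  also have "\<dots> = sigma x * sigma y"
    unfolding sigma_def by (simp add: sum_product sum.cartesian_product)
  finally show ?thesis .
qed

lemma sigma_one: "sigma 1 = 1"
proof -
  have "{d::nat. d dvd 1} = {1}" by auto
  then show ?thesis unfolding sigma_def by simp
qed

lemma geom_bound:
  fixes p :: real assumes "p \<ge> 2"
  shows "(\<Sum>i\<le>a. p^i) \<le> p^a * (p/(p-1))"
proof (induction a)
  case 0 then show ?case using assms by (simp add: field_simps)
next
  case (Suc a)
  have "(\<Sum>i\<le>Suc a. p^i) \<le> p^a * (p/(p-1)) + p^Suc a" using Suc by simp
  also have "\<dots> = p^Suc a * (p/(p-1))" using assms by (simp add: field_simps)
  finally show ?case .
qed

lemma sigma_primepow:
  assumes "prime p"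
  shows "real (sigma (p^a)) \<le> real p ^ a * exp (2 / real p)"
proof -
  have p2: "p \<ge> 2" using assms prime_ge_2_nat by blast
  have "{d. d dvd p^a} = (\<lambda>i. p^i) ` {..a}"
    using divides_primepow_nat[OF assms] by auto
  moreover have "inj_on (\<lambda>i. p^i) {..a}"
    using p2 by (auto intro!: inj_onI simp: power_inject_exp)
  ultimately have "sigma (p^a) = (\<Sum>i\<le>a. p^i)"
    unfolding sigma_def by (simp add: sum.reindex)
  then have "real (sigma (p^a)) = (\<Sum>i\<le>a. real p^i)" by simp
  also have "\<dots> \<le> real p ^ a * (real p / (real p - 1))"
    by (rule geom_bound) (use p2 in simp)
  also have "\<dots> \<le> real p ^ a * exp (2 / real p)"
  proof (rule mult_left_mono)
    have "real p / (real p - 1) \<le> 1 + 2 / real p" using p2 by (simp add: field_simps)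
    also have "\<dots> \<le> exp (2 / real p)" by (rule exp_ge_add_one_self)
    finally show "real p / (real p - 1) \<le> exp (2 / real p)" .
  qed simp
  finally show ?thesis .
qed

lemma sigma_prod:
  assumes "finite S" "\<And>p. p \<in> S \<Longrightarrow> prime p"
  shows "real (sigma (\<Prod>p\<in>S. p ^ e p)) \<le> real (\<Prod>p\<in>S. p ^ e p) * exp (2 * (\<Sum>p\<in>S. 1 / real p))"
  using assms
proof (induction S rule: finite_induct)
  case empty then show ?case using sigma_one by simp
next
  case (insert q S)
  have pq: "prime q" using insert by simp
  have pos: "(\<Prod>p\<in>S. p ^ e p) > 0" using insert by (auto intro!: prod_pos simp: prime_gt_0_nat)
  have qpos: "q ^ e q > 0" using pq prime_gt_0_nat by simp
  have IH: "real (sigma (\<Prod>p\<in>S. p ^ e p)) \<le> real (\<Prod>p\<in>S. p ^ e p) * exp (2 * (\<Sum>p\<in>S. 1 / real p))"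
    using insert by simp
  have "real (sigma (\<Prod>p\<in>insert q S. p ^ e p)) = real (sigma (q ^ e q * (\<Prod>p\<in>S. p ^ e p)))"
    using insert by simp
  also have "\<dots> \<le> real (sigma (q ^ e q)) * real (sigma (\<Prod>p\<in>S. p ^ e p))"
    using sigma_submult[OF qpos pos] by (metis of_nat_le_iff of_nat_mult)
  also have "\<dots> \<le> (real q ^ e q * exp (2 / real q)) * (real (\<Prod>p\<in>S. p ^ e p) * exp (2 * (\<Sum>p\<in>S. 1 / real p)))"
    by (rule mult_mono[OF sigma_primepow[OF pq] IH]) auto
  also have "\<dots> = real (\<Prod>p\<in>insert q S. p ^ e p) * exp (2 * (\<Sum>p\<in>insert q S. 1 / real p))"
    using insert by (simp add: exp_add[symmetric] algebra_simps add_divide_distrib)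
  finally show ?case .
qed

lemma sigma_le_sq: "m > 0 \<Longrightarrow> sigma m \<le> m * m"
proof -
  assume m: "m > 0"
  have sub: "{d. d dvd m} \<subseteq> {1..m}" using m by (auto dest: dvd_imp_le intro: Nat.gr0I)
  have "sigma m \<le> (\<Sum>d\<in>{1..m}. d)"
    unfolding sigma_def by (rule sum_mono2) (use sub in auto)
  also have "\<dots> \<le> (\<Sum>d\<in>{1..m}. m)" by (rule sum_mono) auto
  finally show ?thesis by simp
qed



lemma prod_primes_dvd:
  fixes x :: nat
  assumes "finite A" "\<And>p. p \<in> A \<Longrightarrow> prime p \<and> p dvd x"
  shows "(\<Prod>p\<in>A. p) dvd x"
  using assms
proof (induction A rule: finite_induct)
  case empty then show ?case by simp
next
  case (insert q A)
  have "coprime q (\<Prod>p\<in>A. p)"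
    by (rule prod_coprime_right) (use insert in \<open>auto intro: primes_coprime\<close>)
  then show ?case using insert by (simp add: divides_mult)
qed

lemma cheb:
  "(\<Prod>p\<in>{p. prime p \<and> N < p \<and> p \<le> 2*N}. p) \<le> 4^N"
proof -
  let ?C = "(2*N) choose N"
  have fin: "finite {p. prime p \<and> N < p \<and> p \<le> 2*N}" by (rule finite_subset[of _ "{..2*N}"]) auto
  have fl: "fact N * fact N * ?C = fact (2*N)"
    using binomial_fact_lemma[of N "2*N"] by simp
  have dv: "p dvd ?C" if "prime p" "N < p" "p \<le> 2*N" for p
  proof -
    have "p dvd fact (2*N)" using that prime_dvd_fact_iff by blast
    then have "p dvd fact N * fact N * ?C" using fl by simp
    moreover have "\<not> p dvd fact N" using that prime_dvd_fact_iff by auto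
    ultimately show ?thesis using that(1) by (simp add: prime_dvd_mult_iff)
  qed
  have "(\<Prod>p\<in>{p. prime p \<and> N < p \<and> p \<le> 2*N}. p) dvd ?C"
    by (rule prod_primes_dvd[OF fin]) (use dv in auto)
  then have "(\<Prod>p\<in>{p. prime p \<and> N < p \<and> p \<le> 2*N}. p) \<le> ?C"
    by (rule dvd_imp_le) simp
  also have "?C \<le> (\<Sum>k\<le>2*N. (2*N) choose k)" by (rule member_le_sum) auto
  also have "\<dots> = 4^N" by (simp add: choose_row_sum power_mult)
  finally show ?thesis .
qed

lemma dyadic:
  assumes "j \<ge> 1"
  shows "(\<Sum>p\<in>{p. prime p \<and> 2^j < p \<and> p \<le> 2^(j+1)}. 1 / real p) \<le> 2 / real j"
proof -
  define P where "P = {p::nat. prime p \<and> 2^j < p \<and> p \<le> 2^(j+1)}"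
  have fin: "finite P" unfolding P_def by (rule finite_subset[of _ "{..2^(j+1)}"]) auto
  define c where "c = card P"
  have "(2::nat)^(j*c) = (\<Prod>p\<in>P. 2^j)" by (simp add: c_def power_mult)
  also have "\<dots> \<le> (\<Prod>p\<in>P. p)" by (rule prod_mono) (auto simp: P_def)
  also have "\<dots> \<le> 4^(2^j)" using cheb[of "2^j"] by (simp add: P_def)
  also have "\<dots> = (2^2)^(2^j)" by simp
  also have "\<dots> = 2^(2*2^j)" by (subst power_mult) simp
  also have "\<dots> = 2^(2^(j+1))" by simp
  finally have "j*c \<le> 2^(j+1)" by (rule power_le_imp_le_exp[rotated]) simp
  then have jc: "real j * real c \<le> 2 * 2^j" by (metis of_nat_le_iff of_nat_mult of_nat_numeral of_nat_power power_Suc Suc_eq_plus1)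
  have "(\<Sum>p\<in>P. 1 / real p) \<le> (\<Sum>p\<in>P. 1 / 2^j)"
    by (rule sum_mono) (auto simp: P_def frac_le)
  also have "\<dots> = real c / 2^j" by (simp add: c_def)
  also have "\<dots> \<le> 2 / real j" using jc assms by (simp add: field_simps)
  finally show ?thesis by (simp add: P_def)
qed

lemma range_sum:
  assumes "1 \<le> a" "a \<le> b"
  shows "(\<Sum>p\<in>{p. prime p \<and> 2^a < p \<and> p \<le> 2^b}. 1 / real p) \<le> (\<Sum>j\<in>{a..<b}. 2 / real j)"
  using assms(2)
proof (induction b rule: dec_induct)
  case base
  have "{p::nat. prime p \<and> 2^a < p \<and> p \<le> 2^a} = {}" by auto
  show ?case by (subst \<open>_ = {}\<close>) simp
next
  case (step n)
  have eq: "{p::nat. prime p \<and> 2^a < p \<and> p \<le> 2^Suc n} =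
      {p. prime p \<and> 2^a < p \<and> p \<le> 2^n} \<union> {p. prime p \<and> 2^n < p \<and> p \<le> 2^(n+1)}"
  proof -
    have h: "(2::nat)^a \<le> 2^n" using step(1) by (simp add: power_increasing)
    show ?thesis by auto (metis le_less_trans h)
  qed
  have f1: "finite {p::nat. prime p \<and> 2^a < p \<and> p \<le> 2^n}" by (rule finite_subset[of _ "{..2^n}"]) auto
  have f2: "finite {p::nat. prime p \<and> 2^n < p \<and> p \<le> 2^(n+1)}" by (rule finite_subset[of _ "{..2^(n+1)}"]) auto
  have "(\<Sum>p\<in>{p. prime p \<and> 2^a < p \<and> p \<le> 2^Suc n}. 1 / real p) =
      (\<Sum>p\<in>{p. prime p \<and> 2^a < p \<and> p \<le> 2^n}. 1 / real p) + (\<Sum>p\<in>{p. prime p \<and> 2^n < p \<and> p \<le> 2^(n+1)}. 1 / real p)"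
    unfolding eq by (rule sum.union_disjoint[OF f1 f2]) auto
  also have "\<dots> \<le> (\<Sum>j\<in>{a..<n}. 2 / real j) + 2 / real n"
    by (rule add_mono[OF step(3) dyadic]) (use step(1) assms in auto)
  also have "\<dots> = (\<Sum>j\<in>{a..<Suc n}. 2 / real j)" using step(1) by simp
  finally show ?case .
qed

lemma block_sum:
  "(\<Sum>p\<in>{p. prime p \<and> 2^2^t < p \<and> p \<le> 2^2^(t+1)}. 1 / real p) \<le> 2"
proof -
  have "(\<Sum>p\<in>{p. prime p \<and> 2^2^t < p \<and> p \<le> 2^2^(t+1)}. 1 / real p) \<le> (\<Sum>j\<in>{(2::nat)^t..<2^(t+1)}. 2 / real j)"
    by (rule range_sum) auto
  also have "\<dots> \<le> (\<Sum>j\<in>{(2::nat)^t..<2^(t+1)}. 2 / 2^t)"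
    by (rule sum_mono) (auto simp: frac_le)
  also have "\<dots> = 2" by simp
  finally show ?thesis .
qed



lemma exp_half_le_2: "exp (1/2::real) \<le> 2"
proof -
  have "exp (1/2::real) * exp (1/2) = exp 1" by (simp add: exp_add[symmetric])
  also have "\<dots> \<le> 3" by (rule exp_le)
  finally have "exp (1/2::real)^2 \<le> 2^2" by (simp add: power2_eq_square)
  then show ?thesis by (rule power2_le_imp_le) simp
qed

lemma two_pow_ge: "exp (real k / 2) \<le> (2::real)^k"
proof -
  have "exp (real k / 2) = exp (1/2) ^ k" using exp_of_nat_mult[of k "1/2"] by simp
  also have "\<dots> \<le> 2^k" by (rule power_mono[OF exp_half_le_2]) simp
  finally show ?thesis .
qed

lemma tb:
  assumes "(2::real)^2^t < x"
  shows "real t \<le> 2 * ln (ln x) + 2"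
proof -
  have "exp (real (2^t) / 2) < x" using two_pow_ge[of "2^t"] assms by simp
  moreover have xpos: "0 < x" using assms by (smt (verit) zero_less_power)
  ultimately have "exp (real (2^t) / 2) < exp (ln x)" by simp
  then have "real (2^t) / 2 < ln x" by simp
  moreover have "exp (real t / 2) \<le> real (2^t)" using two_pow_ge[of t] by simp
  ultimately have h: "exp (real t / 2) / 2 < ln x" by simp
  have "real t / 2 - ln 2 = ln (exp (real t / 2) / 2)" by (simp add: ln_div)
  also have "\<dots> < ln (ln x)"
  proof -
    have p: "0 < exp (real t / 2) / 2" by simp
    then have lp: "0 < ln x" using h by linarith
    show ?thesis by (rule ln_less_cancel_iff[THEN iffD2, OF p lp h])
  qed
  finally have "real t / 2 - ln 2 < ln (ln x)" .
  moreover have "ln (2::real) \<le> 1" using ln_le_minus_one[of 2] by simp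
  ultimately show ?thesis by simp
qed

lemma Log_ge1: "Log z \<ge> 1" unfolding Log_def by simp

lemma LLL_bound:
  assumes "ln n > 4"
  shows "ln (ln (ln n)) \<le> Log (Log (Log n))"
proof -
  have "exp 1 \<le> (4::real)" using exp_le by simp
  then have "exp 1 < ln n" using assms by simp
  moreover have "0 < ln n" using assms by simp
  ultimately have "ln (exp 1) < ln (ln n)" by (subst ln_less_cancel_iff) auto
  then have l1: "ln (ln n) > 1" by simp
  have "Log n = ln n" unfolding Log_def using assms by simp
  moreover have "Log (ln n) = ln (ln n)" unfolding Log_def using l1 by simp
  ultimately show ?thesis unfolding Log_def by simp
qed



definition blk :: "nat \<Rightarrow> nat" where "blk p = (LEAST t. p \<le> 2^2^(t+1))"

lemma blk_ex: "p \<le> 2^2^(p+1)"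
proof -
  have "p < 2^p" by (rule less_exp)
  also have "(2::nat)^p \<le> 2^(p+1)" by simp
  also have "p + 1 < 2^(p+1)" by (rule less_exp)
  then have "(2::nat)^(p+1) \<le> 2^2^(p+1)" by (intro power_increasing) auto
  finally show ?thesis by simp
qed

lemma blk_le: "p \<le> 2^2^(blk p + 1)"
  unfolding blk_def by (rule LeastI[of _ p]) (rule blk_ex)

lemma blk_gt: "blk p = Suc t \<Longrightarrow> 2^2^(Suc t) < p"
proof -
  assume "blk p = Suc t"
  then have "t < (LEAST t. p \<le> 2^2^(t+1))" by (simp add: blk_def)
  then have "\<not> p \<le> 2^2^(t+1)" by (rule not_less_Least)
  then show ?thesis by simp
qed

lemma big_sum:
  fixes n :: nat and L :: real
  assumes "n > 0" "L \<ge> 3" "ln (real n) \<le> L" "finite Q"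
    "\<And>p. p \<in> Q \<Longrightarrow> prime p \<and> p dvd n \<and> L < real p"
  shows "(\<Sum>p\<in>Q. 1 / real p) \<le> 1"
proof -
  define k where "k = card Q"
  have "(\<Prod>p\<in>Q. p) dvd n" by (rule prod_primes_dvd) (use assms in auto)
  then have "(\<Prod>p\<in>Q. p) \<le> n" using assms(1) by (rule dvd_imp_le)
  then have pr: "(\<Prod>p\<in>Q. real p) \<le> real n" by (simp only: of_nat_prod[symmetric] of_nat_le_iff)
  have "exp (real k) = exp 1 ^ k" using exp_of_nat_mult[of k 1] by simp
  also have "\<dots> \<le> 3 ^ k" by (rule power_mono[OF exp_le]) simp
  also have "\<dots> \<le> L ^ k" by (rule power_mono) (use assms in auto)
  also have "\<dots> = (\<Prod>p\<in>Q. L)" by (simp add: k_def)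
  also have "\<dots> \<le> (\<Prod>p\<in>Q. real p)" by (rule prod_mono) (use assms in \<open>auto dest!: assms(5)\<close>)
  also note pr
  finally have "exp (real k) \<le> real n" .
  then have "ln (exp (real k)) \<le> ln (real n)" using assms(1) by (subst ln_le_cancel_iff) auto
  then have kL: "real k \<le> L" using assms(3) by simp
  have "(\<Sum>p\<in>Q. 1 / real p) \<le> (\<Sum>p\<in>Q. 1 / L)"
    by (rule sum_mono) (use assms in \<open>auto dest!: assms(5) intro!: divide_left_mono\<close>)
  also have "\<dots> = real k / L" by (simp add: k_def)
  also have "\<dots> \<le> 1" using kL assms(2) by simp
  finally show ?thesis .
qed

lemma small_sum:
  fixes F :: "nat set"
  assumes "F \<subseteq> {p. prime p \<and> p \<le> 2^2^(t+1) \<and> (t = 0 \<or> 2^2^t < p)}"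
  shows "(\<Sum>p\<in>F. 1 / real p) \<le> 5/2"
proof (cases "t = 0")
  case True
  have "F \<subseteq> {2,3}"
  proof
    fix p assume "p \<in> F"
    then have p: "prime p" "p \<le> 4" using assms True by auto
    then have "p \<ge> 2" using prime_ge_2_nat by blast
    moreover have "p \<noteq> 4"
    proof
      assume "p = 4"
      then have "prime ((2::nat) * 2)" using p(1) by simp
      then show False using prime_product[of "2::nat" 2] by simp
    qed
    ultimately show "p \<in> {2,3}" using p(2) by auto
  qed
  then have "(\<Sum>p\<in>F. 1 / real p) \<le> (\<Sum>p\<in>{2,3}. 1 / real p)" by (intro sum_mono2) auto
  also have "\<dots> \<le> 5/2" by simp
  finally show ?thesis .
next
  case False
  then obtain s where t: "t = Suc s" by (cases t) auto
  have fin: "finite {p::nat. prime p \<and> 2^2^t < p \<and> p \<le> 2^2^(t+1)}"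
    by (rule finite_subset[of _ "{..(2::nat)^2^(t+1)}"]) auto
  have "(\<Sum>p\<in>F. 1 / real p) \<le> (\<Sum>p\<in>{p::nat. prime p \<and> 2^2^t < p \<and> p \<le> 2^2^(t+1)}. 1 / real p)"
    by (intro sum_mono2 fin) (use assms False in auto)
  also have "\<dots> \<le> 2" by (rule block_sum)
  finally show ?thesis by simp
qed



lemma main_n:
  fixes n :: nat
  assumes npos: "n > 0"
  shows "\<exists>m. m dvd n \<and> real m \<ge> real n powr ((1/6) / Log (Log (Log (real n)))) \<and>
                 real (sigma m) \<le> exp 5 * real m"
proof -
  define S where "S = prime_factors n"
  define e where "e p = multiplicity p n" for p
  define L where "L = max (ln (real n)) 3"
  define g where "g p = (if L < real p then 0 else Suc (blk p))" for p
  define Y where "Y = g ` S"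
  define F where "F y = {p \<in> S. g p = y}" for y
  define M where "M y = (\<Prod>p\<in>F y. p ^ e p)" for y
  define LLL where "LLL = Log (Log (Log (real n)))"
  have LLL1: "LLL \<ge> 1" unfolding LLL_def by (rule Log_ge1)
  have finS: "finite S" by (simp add: S_def)
  have primeS: "\<And>p. p \<in> S \<Longrightarrow> prime p" by (auto simp: S_def)
  have dvdS: "\<And>p. p \<in> S \<Longrightarrow> p dvd n" by (auto simp: S_def)
  have nprod: "n = (\<Prod>p\<in>S. p ^ e p)" using prime_factorization_nat[OF npos] by (simp add: S_def e_def)
  have nY: "n = (\<Prod>y\<in>Y. M y)"
    using nprod prod.image_gen[OF finS, of "\<lambda>p. p^e p" g] by (simp add: Y_def M_def F_def)
  have finY: "finite Y" using finS by (simp add: Y_def)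
  have FS: "F y \<subseteq> S" for y by (auto simp: F_def)
  have finF: "finite (F y)" for y using finS FS by (rule finite_subset[rotated])
  have Mdvd: "M y dvd n" for y
    unfolding M_def by (subst nprod) (rule prod_dvd_prod_subset[OF finS FS])
  have Mpos: "M y > 0" for y
  proof -
    have "\<And>p. p \<in> F y \<Longrightarrow> p > 0" using FS primeS prime_gt_0_nat by blast
    then show ?thesis unfolding M_def by (auto intro!: prod_pos)
  qed
  have sumF: "(\<Sum>p\<in>F y. 1 / real p) \<le> 5/2" for y
  proof (cases y)
    case 0
    have "(\<Sum>p\<in>F y. 1 / real p) \<le> 1"
      by (rule big_sum[OF npos, of L]) (use 0 primeS dvdS finF in \<open>auto simp: L_def F_def g_def split: if_splits\<close>)
    then show ?thesis by simp
  next
    case (Suc t)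
    have "F y \<subseteq> {p. prime p \<and> p \<le> 2^2^(t+1) \<and> (t = 0 \<or> 2^2^t < p)}"
    proof
      fix p assume p: "p \<in> F y"
      then have bt: "blk p = t" and pS: "p \<in> S" using Suc by (auto simp: F_def g_def split: if_splits)
      have "p \<le> 2^2^(t+1)" using blk_le[of p] bt by simp
      moreover have "t = 0 \<or> 2^2^t < p"
      proof (cases t)
        case (Suc s) then show ?thesis using blk_gt[of p s] bt by simp
      qed simp
      ultimately show "p \<in> {p. prime p \<and> p \<le> 2^2^(t+1) \<and> (t = 0 \<or> 2^2^t < p)}"
        using primeS pS by auto
    qed
    then show ?thesis by (rule small_sum)
  qed
  have ybound: "real y \<le> 2 * LLL + 3" if yY0: "y \<in> Y" for y
  proof -
    obtain p where pS: "p \<in> S" and y: "y = g p" using yY0 by (auto simp: Y_def)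
    show ?thesis
    proof (cases "L < real p")
      case True then show ?thesis using y LLL1 by (simp add: g_def)
    next
      case False
      then have yb: "y = Suc (blk p)" using y by (simp add: g_def)
      show ?thesis
      proof (cases "blk p")
        case 0 then show ?thesis using yb LLL1 by simp
      next
        case (Suc s)
        have "2^2^(Suc s) < p" using blk_gt[OF Suc] .
        then have "(2::real)^2^(Suc s) < real p" by (metis of_nat_less_iff of_nat_numeral of_nat_power)
        also have "\<dots> \<le> L" using False by simp
        finally have lt: "(2::real)^2^(Suc s) < L" .
        have "(2::real)^2 \<le> 2^2^(Suc s)" by (rule power_increasing) auto
        then have four: "(4::real) \<le> 2^2^(Suc s)" by simp
        then have lt2: "(2::real)^2^(Suc s) < ln (real n)" using lt by (simp add: L_def)
        have "real (Suc s) \<le> 2 * ln (ln (ln (real n))) + 2" by (rule tb[OF lt2])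
        also have "ln (ln (ln (real n))) \<le> LLL" unfolding LLL_def by (rule LLL_bound) (use four lt2 in linarith)
        finally show ?thesis using yb Suc by simp
      qed
    qed
  qed
  have cardY: "real (card Y) \<le> 6 * LLL"
  proof -
    have "Y \<subseteq> {..nat \<lfloor>2 * LLL + 3\<rfloor>}"
    proof
      fix x assume "x \<in> Y"
      then have "x \<le> nat \<lfloor>2 * LLL + 3\<rfloor>" by (rule le_nat_floor[OF ybound])
      then show "x \<in> {..nat \<lfloor>2 * LLL + 3\<rfloor>}" by (simp only: atMost_iff)
    qed
    then have "card Y \<le> card {..nat \<lfloor>2 * LLL + 3\<rfloor>}" by (rule card_mono[rotated]) simp
    then have "real (card Y) \<le> real (nat \<lfloor>2 * LLL + 3\<rfloor>) + 1" by simp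
    also have "real (nat \<lfloor>2 * LLL + 3\<rfloor>) \<le> 2 * LLL + 3" by (rule of_nat_floor) (use LLL1 in simp)
    finally show ?thesis using LLL1 by simp
  qed
  show ?thesis
  proof (cases "Y = {}")
    case True
    then have n1: "n = 1" using nY by simp
    show ?thesis
      using sigma_one by (intro exI[of _ 1]) (simp add: n1)
  next
    case False
    have cpos: "card Y > 0" using False finY by (simp add: card_gt_0_iff)
    obtain y where yY: "y \<in> Y" and ylog: "ln (real n) / real (card Y) \<le> ln (real (M y))"
    proof (rule ccontr)
      assume "\<not> thesis"
      then have less: "\<And>y. y \<in> Y \<Longrightarrow> ln (real (M y)) < ln (real n) / real (card Y)"
        using that by force
      have "real n = (\<Prod>y\<in>Y. real (M y))" by (subst nY) (simp add: of_nat_prod)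
      then have "ln (real n) = (\<Sum>y\<in>Y. ln (real (M y)))"
        using Mpos by (simp add: ln_prod[OF finY])
      also have "\<dots> < (\<Sum>y\<in>Y. ln (real n) / real (card Y))"
        by (rule sum_strict_mono[OF finY False less])
      also have "\<dots> = ln (real n)" using cpos by simp
      finally show False by simp
    qed
    show ?thesis
    proof (intro exI conjI)
      show "M y dvd n" by (rule Mdvd)
      have "(1/6) / LLL \<le> 1 / real (card Y)"
        using cardY cpos LLL1 by (simp add: field_simps)
      then have "real n powr ((1/6) / LLL) \<le> real n powr (1 / real (card Y))"
        by (rule powr_mono) (use npos in simp)
      also have "\<dots> = exp (ln (real n) / real (card Y))"
        using npos by (simp add: powr_def)
      also have "\<dots> \<le> exp (ln (real (M y)))" using ylog by simp
      also have "\<dots> = real (M y)" using Mpos[of y] by simp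
      finally show "real n powr ((1/6) / Log (Log (Log (real n)))) \<le> real (M y)"
        by (simp add: LLL_def)
      have "real (sigma (M y)) \<le> real (M y) * exp (2 * (\<Sum>p\<in>F y. 1 / real p))"
        unfolding M_def by (rule sigma_prod[OF finF]) (use FS primeS in auto)
      also have "\<dots> \<le> real (M y) * exp 5"
        by (rule mult_left_mono) (use sumF[of y] in auto)
      finally show "real (sigma (M y)) \<le> exp 5 * real (M y)" by (simp add: mult.commute)
    qed
  qed
qed

theorem mainTheorem7:
  shows "\<exists>c::real. c > 0 \<and> (\<exists>K::real. K > 0 \<and>
           (\<forall>n::nat. n > 0 \<longrightarrow>
              (\<exists>m::nat. m dvd n \<and>
                 real m \<ge> real n powr (c / Log (Log (Log (real n)))) \<and>
                 real (sigma m) \<le> K * real m)))"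
  apply (rule exI[of _ "1/6"], rule conjI, simp)
  apply (rule exI[of _ "exp 5"], rule conjI, simp)
  using main_n by blast

end
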